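(* Let $\lambda\in\mathbb{R}$ be fixed, $p=(1+\lambda n^{-1/3})/n$, and $A=A(n)=o(n^{2/3})$. Let $T=\lceil n^{2/3}/A\rceil$, $L=\lfloor n/(2T)\rfloor$, and for $B>0$ let $\mathcal{G}_{2L-1}(B)=\{t_{2L-1}\le BLT^{1/2}\}$, where $(t_i)$ are the excursion end times of the exploration process of $\mathbb{G}(n,p)$ described in the context. There exist constants $B_0>0$ and $A_0=A_0(\lambda)>0$ such that for any $A\ge A_0$, $B\ge B_0$ and all sufficiently large $n$, \[\mathbb{P}(\mathcal{G}_{2L-1}(B)^c)\le\exp(-cA^{3/2})\] for some constant $c=c(B)>0$.
   Context: $\mathbb{G}(n,p)$ is the Erdős–Rényi random graph on $[n]$ (each edge present independently with probability $p$). Exploration process: fix an ordering of $[n]$ with some vertex $v$ first. Sets of active, unseen and explored vertices $\mathcal{A}_t,\mathcal{U}_t,\mathcal{E}_t$ partition $[n]$; initially $\mathcal{A}_0=\{v\}$, $\mathcal{U}_0=[n]\setminus\{v\}$, $\mathcal{E}_0=\emptyset$. At step $t\ge1$: if $\mathcal{A}_{t-1}\ne\emptyset$ let $u_t$ be the first active vertex; if $\mathcal{A}_{t-1}=\emptyset$ and $\mathcal{U}_{t-1}\ne\emptyset$ let $u_t$ be the first unseen vertex; otherwise stop. Let $\mathcal{D}_t=\{x\in\mathcal{U}_{t-1}\setminus\{u_t\}:x\sim u_t\}$ and update $\mathcal{U}_t=\mathcal{U}_{t-1}\setminus(\mathcal{D}_t\cup\{u_t\})$, $\mathcal{A}_t=(\mathcal{A}_{t-1}\setminus\{u_t\})\cup\mathcal{D}_t$,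 $\mathcal{E}_t=\mathcal{E}_{t-1}\cup\{u_t\}$. The process runs for $n$ steps. Let $Y_t=|\mathcal{A}_t|$, $t_0=0$ and $t_i=\min\{t\ge t_{i-1}+1:Y_t=0\}$ (defined while the procedure runs); $t_i-t_{i-1}$ is the size of the $i$-th explored component. *)

theory Defs
  imports "HOL-Probability.Probability" "HOL-Library.Landau_Symbols" "HOL-Library.Extended_Nat"
begin

text \<open>Vertex set [n] = {1..n}, with the natural order as the fixed ordering (vertex 1 first).
  A graph on [n] is given by a function on unordered pairs {x,y} (x \<noteq> y) telling whether the
  edge is present.\<close>

definition vpairs :: "nat \<Rightarrow> nat set set" where
  "vpairs n = {{x, y} | x y. x \<in> {1..n} \<and> y \<in> {1..n} \<and> x \<noteq> y}"

definition gnp :: "nat \<Rightarrow> real \<Rightarrow> (nat set \<Rightarrow> bool) pmf" where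
  "gnp n p = Pi_pmf (vpairs n) False (\<lambda>_. bernoulli_pmf p)"

definition adj :: "(nat set \<Rightarrow> bool) \<Rightarrow> nat \<Rightarrow> nat \<Rightarrow> bool" where
  "adj g x y \<longleftrightarrow> x \<noteq> y \<and> g {x, y}"

text \<open>Exploration state: (active, unseen, explored).\<close>
type_synonym expl_state = "nat set \<times> nat set \<times> nat set"

definition expl_step :: "(nat set \<Rightarrow> bool) \<Rightarrow> expl_state \<Rightarrow> expl_state" where
  "expl_step g s = (case s of (A, U, E) \<Rightarrow>
     if A = {} \<and> U = {} then (A, U, E)
     else let u = (if A \<noteq> {} then Min A else Min U);
              D = {x \<in> U - {u}. adj g u x}
          in ((A - {u}) \<union> D, U - (D \<union> {u}), E \<union> {u}))"

definition expl_init :: "nat \<Rightarrow> expl_state" where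
  "expl_init n = ({1}, {2..n}, {})"

definition expl_state :: "nat \<Rightarrow> (nat set \<Rightarrow> bool) \<Rightarrow> nat \<Rightarrow> expl_state" where
  "expl_state n g t = (expl_step g ^^ t) (expl_init n)"

definition Yproc :: "nat \<Rightarrow> (nat set \<Rightarrow> bool) \<Rightarrow> nat \<Rightarrow> nat" where
  "Yproc n g t = card (fst (expl_state n g t))"

fun exc_end :: "nat \<Rightarrow> (nat set \<Rightarrow> bool) \<Rightarrow> nat \<Rightarrow> enat" where
  "exc_end n g 0 = 0"
| "exc_end n g (Suc i) =
     (case exc_end n g i of
        \<infinity> \<Rightarrow> \<infinity>
      | enat s \<Rightarrow> (if \<exists>t. s + 1 \<le> t \<and> t \<le> n \<and> Yproc n g t = 0
                  then enat (LEAST t. s + 1 \<le> t \<and> t \<le> n \<and> Yproc n g t = 0)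
                  else \<infinity>))"

definition Tpar :: "nat \<Rightarrow> real \<Rightarrow> nat" where
  "Tpar n A = nat \<lceil>real n powr (2/3) / A\<rceil>"

definition Lpar :: "nat \<Rightarrow> real \<Rightarrow> nat" where
  "Lpar n A = nat \<lfloor>real n / (2 * real (Tpar n A))\<rfloor>"

definition good_event :: "nat \<Rightarrow> real \<Rightarrow> real \<Rightarrow> (nat set \<Rightarrow> bool) set" where
  "good_event n A B = {g. \<exists>k. exc_end n g (2 * Lpar n A - 1) = enat k \<and>
        real k \<le> B * real (Lpar n A) * sqrt (real (Tpar n A))}"

end

theory Submission
  imports Defs
begin

definition pairs :: "nat set \<Rightarrow> nat set set" where
  "pairs V = {{x, y} | x y. x \<in> V \<and> y \<in> V \<and> x \<noteq> y}"

definition uvert :: "expl_state \<Rightarrow> nat" where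
  "uvert s = (case s of (A,U,E) \<Rightarrow> if A \<noteq> {} then Min A else Min U)"

definition Dset :: "(nat set \<Rightarrow> bool) \<Rightarrow> expl_state \<Rightarrow> nat set" where
  "Dset g s = (case s of (A,U,E) \<Rightarrow> if A = {} \<and> U = {} then {}
     else {x \<in> U - {uvert s}. adj g (uvert s) x})"

fun disc :: "(nat set \<Rightarrow> bool) \<Rightarrow> expl_state \<Rightarrow> nat \<Rightarrow> nat" where
  "disc g s 0 = 0"
| "disc g s (Suc k) = card (Dset g s) + disc g (expl_step g s) k"

lemma expl_step_eq:
  "expl_step g (A,U,E) = (if A = {} \<and> U = {} then (A,U,E) else
     ((A - {uvert (A,U,E)}) \<union> Dset g (A,U,E), U - (Dset g (A,U,E) \<union> {uvert (A,U,E)}),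
      E \<union> {uvert (A,U,E)}))"
  by (simp add: expl_step_def uvert_def Dset_def Let_def)

lemma uvert_in: "finite (A \<union> U) \<Longrightarrow> A \<union> U \<noteq> {} \<Longrightarrow> uvert (A,U,E) \<in> A \<union> U"
  by (auto simp: uvert_def)

lemma Dset_sub: "Dset g (A,U,E) \<subseteq> U - {uvert (A,U,E)}"
  by (auto simp: Dset_def)

lemma step_union:
  assumes "finite (A \<union> U)" "A \<union> U \<noteq> {}"
  shows "(case expl_step g (A,U,E) of (A',U',E') \<Rightarrow> A' \<union> U') = (A \<union> U) - {uvert (A,U,E)}"
  using Dset_sub[of g A U E] assms by (auto simp: expl_step_eq)

lemma disc_empty: "disc g ({},{},E) k = 0"
  by (induction k) (auto simp: Dset_def expl_step_eq)

lemma pairs_mono: "V \<subseteq> W \<Longrightarrow> pairs V \<subseteq> pairs W"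
  by (auto simp: pairs_def)

lemma Dset_local:
  assumes "\<And>x. x \<in> U - {uvert (A,U,E)} \<Longrightarrow> g {uvert (A,U,E), x} = h {uvert (A,U,E), x}"
  shows "Dset g (A,U,E) = Dset h (A,U,E)"
  using assms by (auto simp: Dset_def adj_def)

lemma step_local:
  assumes "\<And>x. x \<in> U - {uvert (A,U,E)} \<Longrightarrow> g {uvert (A,U,E), x} = h {uvert (A,U,E), x}"
  shows "expl_step g (A,U,E) = expl_step h (A,U,E)"
proof -
  have "Dset g (A,U,E) = Dset h (A,U,E)" by (rule Dset_local) (rule assms)
  then show ?thesis by (simp add: expl_step_eq)
qed

lemma disc_local:
  assumes "finite (A \<union> U)" "\<And>e. e \<in> pairs (A \<union> U) \<Longrightarrow> g e = h e"
  shows "disc g (A,U,E) k = disc h (A,U,E) k"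
  using assms
proof (induction k arbitrary: A U E)
  case 0
  then show ?case by simp
next
  case (Suc k)
  show ?case
  proof (cases "A \<union> U = {}")
    case True
    then have "A = {}" "U = {}" by auto
    then show ?thesis by (simp only: disc_empty)
  next
    case False
    define u where "u = uvert (A,U,E)"
    have u: "u \<in> A \<union> U" using uvert_in[OF Suc.prems(1) False] u_def by simp
    have loc: "\<And>x. x \<in> U - {u} \<Longrightarrow> g {u, x} = h {u, x}"
      using u by (intro Suc.prems(2)) (auto simp: pairs_def)
    have D: "Dset g (A,U,E) = Dset h (A,U,E)" using Dset_local loc u_def by blast
    have S: "expl_step g (A,U,E) = expl_step h (A,U,E)" using step_local loc u_def by blast
    obtain A' U' E' where s': "expl_step g (A,U,E) = (A',U',E')" by (cases "expl_step g (A,U,E)") auto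
    have un: "A' \<union> U' = (A \<union> U) - {u}" using step_union[OF Suc.prems(1) False, of g E] s' u_def by simp
    have "disc g (A',U',E') k = disc h (A',U',E') k"
      apply (rule Suc.IH)
      using Suc.prems un pairs_mono[of "A' \<union> U'" "A \<union> U"] by auto
    then show ?thesis using D S s' by simp
  qed
qed

lemma bern_mgf:
  fixes p \<theta> :: real
  assumes "0 \<le> p" "p \<le> 1"
  shows "(\<integral>\<^sup>+b. ennreal (exp (\<theta> * of_bool b)) \<partial>measure_pmf (bernoulli_pmf p)) = ennreal (1 - p + p * exp \<theta>)"
proof -
  have "(\<integral>\<^sup>+b. ennreal (exp (\<theta> * of_bool b)) \<partial>measure_pmf (bernoulli_pmf p))
      = (\<Sum>b\<in>UNIV. ennreal (exp (\<theta> * of_bool b)) * pmf (bernoulli_pmf p) b)"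
    by (rule nn_integral_measure_pmf_support) auto
  also have "\<dots> = ennreal (exp \<theta>) * ennreal p + ennreal 1 * ennreal (1 - p)"
    using assms by (simp add: UNIV_bool)
  also have "\<dots> = ennreal (1 - p + p * exp \<theta>)"
    using assms by (simp add: ennreal_mult'[symmetric] ennreal_plus[symmetric] mult.commute add.commute del: ennreal_plus)
  finally show ?thesis .
qed

lemma card_sum_bool: assumes "finite W" shows "real (card {x\<in>W. P x}) = (\<Sum>x\<in>W. of_bool (P x))"
proof -
  have "W \<inter> {x. P x} = {x\<in>W. P x}" by auto
  moreover have "(\<Sum>x\<in>W. of_bool (P x)) = real (card (W \<inter> {x. P x}))"
    using assms by simp
  ultimately show ?thesis by metis
qed

lemma mgf_one:
  fixes p \<theta> :: real
  assumes P: "finite P" and W: "finite W" and sub: "(\<lambda>x. {u,x}) ` W \<subseteq> P" and uW: "u \<notin> W"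
    and p: "0 \<le> p" "p \<le> 1"
  shows "(\<integral>\<^sup>+f. ennreal (exp (\<theta> * real (card {x\<in>W. f {u,x}}))) \<partial>measure_pmf (Pi_pmf P False (\<lambda>_. bernoulli_pmf p)))
     = ennreal ((1 - p + p * exp \<theta>) ^ card W)"
proof -
  define P' where "P' = (\<lambda>x. {u,x}) ` W"
  have inj: "inj_on (\<lambda>x. {u,x}) W" using uW by (auto simp: inj_on_def doubleton_eq_iff)
  define h where "h e b = (if e \<in> P' then ennreal (exp (\<theta> * of_bool b)) else 1)" for e b
  have eq: "ennreal (exp (\<theta> * real (card {x\<in>W. f {u,x}}))) = (\<Prod>e\<in>P. h e (f e))" for f
  proof -
    have "(\<Prod>e\<in>P. h e (f e)) = (\<Prod>e\<in>P'. ennreal (exp (\<theta> * of_bool (f e))))"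
      using sub P unfolding P'_def h_def by (intro prod.mono_neutral_cong_right) auto
    also have "\<dots> = (\<Prod>x\<in>W. ennreal (exp (\<theta> * of_bool (f {u,x}))))"
      unfolding P'_def by (subst prod.reindex[OF inj]) simp
    also have "\<dots> = ennreal (\<Prod>x\<in>W. exp (\<theta> * of_bool (f {u,x})))"
      by (rule prod_ennreal) simp
    also have "(\<Prod>x\<in>W. exp (\<theta> * of_bool (f {u,x}))) = exp (\<theta> * real (card {x\<in>W. f {u,x}}))"
    proof -
      have "(\<Prod>x\<in>W. exp (\<theta> * of_bool (f {u,x}))) = exp (\<Sum>x\<in>W. \<theta> * of_bool (f {u,x}))"
        using W by (rule exp_sum[symmetric])
      also have "(\<Sum>x\<in>W. \<theta> * of_bool (f {u,x})) = \<theta> * real (card {x\<in>W. f {u,x}})"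
        using W by (simp only: card_sum_bool sum_distrib_left)
      finally show ?thesis .
    qed
    finally show ?thesis by simp
  qed
  have "(\<integral>\<^sup>+f. ennreal (exp (\<theta> * real (card {x\<in>W. f {u,x}}))) \<partial>measure_pmf (Pi_pmf P False (\<lambda>_. bernoulli_pmf p)))
      = (\<integral>\<^sup>+f. (\<Prod>e\<in>P. h e (f e)) \<partial>measure_pmf (Pi_pmf P False (\<lambda>_. bernoulli_pmf p)))"
    using eq by simp
  also have "\<dots> = (\<Prod>e\<in>P. \<integral>\<^sup>+b. h e b \<partial>measure_pmf (bernoulli_pmf p))"
    by (rule nn_integral_prod_Pi_pmf) (rule P)
  also have "\<dots> = (\<Prod>e\<in>P. if e \<in> P' then ennreal (1 - p + p * exp \<theta>) else 1)"
  proof (intro prod.cong refl)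
    fix e assume "e \<in> P"
    show "(\<integral>\<^sup>+b. h e b \<partial>measure_pmf (bernoulli_pmf p)) = (if e \<in> P' then ennreal (1 - p + p * exp \<theta>) else 1)"
    proof (cases "e \<in> P'")
      case True
      then have "h e = (\<lambda>b. ennreal (exp (\<theta> * of_bool b)))" by (auto simp: h_def)
      then show ?thesis using True bern_mgf[OF p] by simp
    next
      case False
      then have "h e = (\<lambda>b. 1)" by (auto simp: h_def)
      then show ?thesis using False by (simp add: measure_pmf.emeasure_space_1)
    qed
  qed
  also have "\<dots> = (\<Prod>e\<in>P'. ennreal (1 - p + p * exp \<theta>))"
    using sub P unfolding P'_def by (intro prod.mono_neutral_cong_left[symmetric]) auto
  also have "\<dots> = ennreal (1 - p + p * exp \<theta>) ^ card W"
    using card_image[OF inj] by (simp add: P'_def)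
  also have "\<dots> = ennreal ((1 - p + p * exp \<theta>) ^ card W)"
    using p by (intro ennreal_power) simp
  finally show ?thesis .
qed

fun sfun :: "nat \<Rightarrow> nat \<Rightarrow> nat" where
  "sfun c 0 = 0"
| "sfun c (Suc k) = (c - 1) + sfun (c - 1) k"

lemma finite_pairs: "finite V \<Longrightarrow> finite (pairs V)"
  by (rule finite_subset[of _ "Pow V"]) (auto simp: pairs_def)

lemma mgf:
  fixes \<theta> p :: real
  assumes "finite (A \<union> U)" "0 \<le> \<theta>" "0 \<le> p" "p \<le> 1"
  shows "(\<integral>\<^sup>+g. ennreal (exp (\<theta> * real (disc g (A,U,E) k)))
           \<partial>measure_pmf (Pi_pmf (pairs (A \<union> U)) False (\<lambda>_. bernoulli_pmf p)))
         \<le> ennreal ((1 - p + p * exp \<theta>) ^ sfun (card (A \<union> U)) k)"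
  using assms(1)
proof (induction k arbitrary: A U E)
  case 0
  then show ?case by (simp add: measure_pmf.emeasure_space_1)
next
  case (Suc k)
  define M where "M = 1 - p + p * exp \<theta>"
  have M1: "1 \<le> M"
  proof -
    have "p * 1 \<le> p * exp \<theta>" using assms(2,3) by (intro mult_left_mono) auto
    then show ?thesis by (simp add: M_def)
  qed
  show ?case
  proof (cases "A \<union> U = {}")
    case True
    then have "A = {}" "U = {}" by auto
    then have "disc g (A,U,E) (Suc k) = 0" for g by (simp only: disc_empty)
    then have "(\<integral>\<^sup>+g. ennreal (exp (\<theta> * real (disc g (A,U,E) (Suc k))))
           \<partial>measure_pmf (Pi_pmf (pairs (A \<union> U)) False (\<lambda>_. bernoulli_pmf p))) = 1"
      by (simp add: measure_pmf.emeasure_space_1)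
    also have "1 \<le> ennreal (M ^ sfun (card (A \<union> U)) (Suc k))"
      using M1 by (simp add: one_le_power)
    finally show ?thesis by (simp add: M_def)
  next
    case False
    define V where "V = A \<union> U"
    define u where "u = uvert (A,U,E)"
    have finV: "finite V" using Suc.prems V_def by simp
    have u: "u \<in> V" using uvert_in[OF Suc.prems(1) False] u_def V_def by simp
    define P1 where "P1 = {e \<in> pairs V. u \<in> e}"
    define P2 where "P2 = pairs (V - {u})"
    have PV: "pairs V = P1 \<union> P2"
      unfolding P1_def P2_def using pairs_mono[of "V - {u}" V] by (auto simp: pairs_def)
    have disj: "P1 \<inter> P2 = {}" unfolding P1_def P2_def by (auto simp: pairs_def)
    have fin1: "finite P1" "finite P2" using finite_pairs[OF finV] PV by auto
    define Q1 where "Q1 = Pi_pmf P1 False (\<lambda>_. bernoulli_pmf p)"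
    define Q2 where "Q2 = Pi_pmf P2 False (\<lambda>_. bernoulli_pmf p)"
    define mrg where "mrg = (\<lambda>(f :: nat set \<Rightarrow> bool, g :: nat set \<Rightarrow> bool) x. if x \<in> P1 then f x else g x)"
    have Qeq: "Pi_pmf (pairs V) False (\<lambda>_. bernoulli_pmf p) = map_pmf mrg (pair_pmf Q1 Q2)"
      unfolding PV Q1_def Q2_def mrg_def by (rule Pi_pmf_union[OF fin1 disj])
    define W where "W = U - {u}"
    have finW: "finite W" using finV V_def W_def by auto
    have WV: "card W \<le> card V - 1"
    proof -
      have "W \<subseteq> V - {u}" using W_def V_def by auto
      then have "card W \<le> card (V - {u})" using finV by (intro card_mono) auto
      then show ?thesis using u finV by simp
    qed
    have inP1: "{u, x} \<in> P1" if "x \<in> W" for x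
      using that u unfolding P1_def W_def V_def pairs_def by auto
    have Dform: "Dset f (A,U,E) = {x \<in> W. f {u,x}}" for f
      using False unfolding Dset_def W_def u_def adj_def by auto
    have key: "ennreal (exp (\<theta> * real (disc (mrg (f, g2)) (A,U,E) (Suc k))))
        = ennreal (exp (\<theta> * real (card {x \<in> W. f {u,x}}))) *
          ennreal (exp (\<theta> * real (disc g2 (expl_step f (A,U,E)) k)))" for f g2
    proof -
      have loc: "\<And>x. x \<in> U - {uvert (A,U,E)} \<Longrightarrow> mrg (f,g2) {uvert (A,U,E), x} = f {uvert (A,U,E), x}"
        using inP1 unfolding W_def u_def mrg_def by auto
      have D: "Dset (mrg (f,g2)) (A,U,E) = Dset f (A,U,E)" by (rule Dset_local) (rule loc)
      have S: "expl_step (mrg (f,g2)) (A,U,E) = expl_step f (A,U,E)" by (rule step_local) (rule loc)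
      obtain A' U' E' where s': "expl_step f (A,U,E) = (A',U',E')" by (cases "expl_step f (A,U,E)") auto
      have un: "A' \<union> U' = V - {u}" using step_union[OF Suc.prems(1) False, of f E] s' u_def V_def by simp
      have "disc (mrg (f,g2)) (A',U',E') k = disc g2 (A',U',E') k"
        apply (rule disc_local)
        using un finV disj unfolding P2_def mrg_def by auto
      then have "disc (mrg (f, g2)) (A,U,E) (Suc k) = card {x \<in> W. f {u,x}} + disc g2 (expl_step f (A,U,E)) k"
        using D S s' Dform by simp
      then show ?thesis by (simp add: distrib_left exp_add ennreal_mult')
    qed
    have IH: "(\<integral>\<^sup>+g2. ennreal (exp (\<theta> * real (disc g2 (expl_step f (A,U,E)) k))) \<partial>measure_pmf Q2)
        \<le> ennreal (M ^ sfun (card V - 1) k)" for f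
    proof -
      obtain A' U' E' where s': "expl_step f (A,U,E) = (A',U',E')" by (cases "expl_step f (A,U,E)") auto
      have un: "A' \<union> U' = V - {u}" using step_union[OF Suc.prems(1) False, of f E] s' u_def V_def by simp
      have "(\<integral>\<^sup>+g2. ennreal (exp (\<theta> * real (disc g2 (A',U',E') k)))
           \<partial>measure_pmf (Pi_pmf (pairs (A' \<union> U')) False (\<lambda>_. bernoulli_pmf p)))
         \<le> ennreal ((1 - p + p * exp \<theta>) ^ sfun (card (A' \<union> U')) k)"
        by (rule Suc.IH) (use un finV in auto)
      then show ?thesis using s' un u finV unfolding Q2_def P2_def M_def by simp
    qed
    have "(\<integral>\<^sup>+g. ennreal (exp (\<theta> * real (disc g (A,U,E) (Suc k))))
           \<partial>measure_pmf (Pi_pmf (pairs (A \<union> U)) False (\<lambda>_. bernoulli_pmf p)))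
        = (\<integral>\<^sup>+f. \<integral>\<^sup>+g2. ennreal (exp (\<theta> * real (disc (mrg (f, g2)) (A,U,E) (Suc k)))) \<partial>measure_pmf Q2 \<partial>measure_pmf Q1)"
      unfolding V_def[symmetric] Qeq by (simp add: nn_integral_pair_pmf')
    also have "\<dots> = (\<integral>\<^sup>+f. ennreal (exp (\<theta> * real (card {x \<in> W. f {u,x}}))) *
          (\<integral>\<^sup>+g2. ennreal (exp (\<theta> * real (disc g2 (expl_step f (A,U,E)) k))) \<partial>measure_pmf Q2) \<partial>measure_pmf Q1)"
      by (intro nn_integral_cong, simp only: key, rule nn_integral_cmult) simp
    also have "\<dots> \<le> (\<integral>\<^sup>+f. ennreal (exp (\<theta> * real (card {x \<in> W. f {u,x}}))) *
          ennreal (M ^ sfun (card V - 1) k) \<partial>measure_pmf Q1)"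
      by (intro nn_integral_mono mult_left_mono IH) auto
    also have "\<dots> = (\<integral>\<^sup>+f. ennreal (exp (\<theta> * real (card {x \<in> W. f {u,x}}))) \<partial>measure_pmf Q1) *
          ennreal (M ^ sfun (card V - 1) k)"
      by (rule nn_integral_multc) simp
    also have "(\<integral>\<^sup>+f. ennreal (exp (\<theta> * real (card {x \<in> W. f {u,x}}))) \<partial>measure_pmf Q1) = ennreal (M ^ card W)"
      unfolding Q1_def M_def
      by (rule mgf_one[OF fin1(1) finW]) (use inP1 assms(3,4) W_def in auto)
    also have "ennreal (M ^ card W) * ennreal (M ^ sfun (card V - 1) k) = ennreal (M ^ (card W + sfun (card V - 1) k))"
      using M1 by (simp add: ennreal_mult'[symmetric] power_add)
    also have "\<dots> \<le> ennreal (M ^ sfun (card (A \<union> U)) (Suc k))"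
      using M1 WV unfolding V_def by (intro ennreal_leI power_increasing) auto
    finally show ?thesis by (simp add: M_def)
  qed
qed

lemma expl_state_Suc: "expl_state n g (Suc t) = expl_step g (expl_state n g t)"
  by (simp add: expl_state_def)

lemma disc_Suc': "disc g s (Suc m) = disc g s m + card (Dset g ((expl_step g ^^ m) s))"
  by (induction m arbitrary: s) (simp_all add: funpow_swap1)

lemma disc_Suc_state: "disc g (expl_init n) (Suc m) = disc g (expl_init n) m + card (Dset g (expl_state n g m))"
  unfolding expl_state_def by (rule disc_Suc')

definition inv_ok :: "nat \<Rightarrow> nat \<Rightarrow> expl_state \<Rightarrow> bool" where
  "inv_ok n t s = (case s of (A,U,E) \<Rightarrow> finite (A \<union> U) \<and> A \<inter> U = {} \<and> card (A \<union> U) = n - t)"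

lemma inv_state:
  assumes "1 \<le> n" "t \<le> n"
  shows "inv_ok n t (expl_state n g t)"
  using assms(2)
proof (induction t)
  case 0
  have "{1::nat} \<union> {2..n} = {1..n}" using assms(1) by auto
  then show ?case by (auto simp: inv_ok_def expl_state_def expl_init_def)
next
  case (Suc t)
  obtain A U E where s: "expl_state n g t = (A,U,E)" by (cases "expl_state n g t") auto
  have I: "finite (A \<union> U)" "A \<inter> U = {}" "card (A \<union> U) = n - t"
    using Suc s by (auto simp: inv_ok_def)
  have ne: "A \<union> U \<noteq> {}" using I Suc.prems by auto
  obtain A' U' E' where s': "expl_step g (A,U,E) = (A',U',E')" by (cases "expl_step g (A,U,E)") auto
  have un: "A' \<union> U' = (A \<union> U) - {uvert (A,U,E)}" using step_union[OF I(1) ne, of g E] s' by simp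
  have uin: "uvert (A,U,E) \<in> A \<union> U" using uvert_in[OF I(1) ne] .
  have ne': "\<not> (A = {} \<and> U = {})" using ne by auto
  have s'': "A' = (A - {uvert (A,U,E)}) \<union> Dset g (A,U,E)" "U' = U - (Dset g (A,U,E) \<union> {uvert (A,U,E)})"
    using s' ne' by (simp_all add: expl_step_eq)
  have dj: "A' \<inter> U' = {}"
    using s'' I(2) Dset_sub[of g A U E] by auto
  have "card (A' \<union> U') = n - Suc t" using un I uin by simp
  moreover have "finite (A' \<union> U')" using un I(1) by simp
  ultimately show ?case using s' s dj by (simp add: expl_state_Suc inv_ok_def)
qed

lemma count_inv:
  assumes "1 \<le> n" "m \<le> n"
  shows "real m + real (Yproc n g m) = 1 + real (disc g (expl_init n) m) + real (card {t \<in> {1..<m}. Yproc n g t = 0})"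
  using assms(2)
proof (induction m)
  case 0
  then show ?case by (simp add: Yproc_def expl_state_def expl_init_def)
next
  case (Suc m)
  obtain A U E where s: "expl_state n g m = (A,U,E)" by (cases "expl_state n g m") auto
  have I: "finite (A \<union> U)" "A \<inter> U = {}" "card (A \<union> U) = n - m"
    using inv_state[OF assms(1), of m g] Suc.prems s by (auto simp: inv_ok_def)
  have ne: "A \<union> U \<noteq> {}" using I Suc.prems by auto
  define u where "u = uvert (A,U,E)"
  define D where "D = Dset g (A,U,E)"
  have DU: "D \<subseteq> U - {u}" using Dset_sub u_def D_def by simp
  have finD: "finite D" using DU I(1) by (meson Diff_subset finite_Un finite_subset)
  have step: "expl_state n g (Suc m) = ((A - {u}) \<union> D, U - (D \<union> {u}), E \<union> {u})"
  proof -
    have ne': "\<not> (A = {} \<and> U = {})" using ne by auto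
    have "expl_step g (A,U,E) = ((A - {u}) \<union> D, U - (D \<union> {u}), E \<union> {u})"
      unfolding expl_step_eq u_def D_def by (rule if_not_P[OF ne'])
    then show ?thesis by (simp add: expl_state_Suc s)
  qed
  have IH: "real m + real (card A) = 1 + real (disc g (expl_init n) m) + real (card {t \<in> {1..<m}. Yproc n g t = 0})"
    using Suc s by (simp add: Yproc_def)
  have Nsuc: "disc g (expl_init n) (Suc m) = disc g (expl_init n) m + card D"
    using disc_Suc_state s D_def by simp
  have Zset: "{t \<in> {1..<Suc m}. Yproc n g t = 0} = {t \<in> {1..<m}. Yproc n g t = 0} \<union> (if 1 \<le> m \<and> card A = 0 then {m} else {})"
    using s by (auto simp: Yproc_def less_Suc_eq)
  show ?case
  proof (cases "A = {}")
    case False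
    have uA: "u \<in> A" using False I(1) by (simp add: u_def uvert_def)
    have cA: "card A \<noteq> 0" using False I(1) by simp
    have "card ((A - {u}) \<union> D) = card (A - {u}) + card D"
      using DU I finD by (intro card_Un_disjoint) auto
    moreover have "card (A - {u}) = card A - 1" using uA I(1) by simp
    moreover have "card A \<ge> 1" using cA by simp
    ultimately have cY: "real (Yproc n g (Suc m)) = real (card A) - 1 + real (card D)"
      using step by (simp add: Yproc_def)
    have "{t \<in> {1..<Suc m}. Yproc n g t = 0} = {t \<in> {1..<m}. Yproc n g t = 0}" using Zset cA by simp
    then show ?thesis using IH cY Nsuc by simp
  next
    case True
    have m1: "1 \<le> m"
    proof (rule ccontr)
      assume "\<not> 1 \<le> m"
      then have "m = 0" by simp
      then show False using s True by (simp add: expl_state_def expl_init_def)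
    qed
    have "(A - {u}) \<union> D = D" using True by simp
    then have cY: "real (Yproc n g (Suc m)) = real (card D)" using step by (simp add: Yproc_def)
    have "{t \<in> {1..<Suc m}. Yproc n g t = 0} = insert m {t \<in> {1..<m}. Yproc n g t = 0}" using Zset True m1 by simp
    then have "card {t \<in> {1..<Suc m}. Yproc n g t = 0} = Suc (card {t \<in> {1..<m}. Yproc n g t = 0})" by simp
    then show ?thesis using IH cY Nsuc True by simp
  qed
qed

lemma zeros_lower:
  assumes "1 \<le> n" "m \<le> n"
  shows "real (card {t \<in> {1..m}. Yproc n g t = 0}) \<ge> real m - 1 - real (disc g (expl_init n) m)"
proof -
  have "card {t \<in> {1..<m}. Yproc n g t = 0} \<le> card {t \<in> {1..m}. Yproc n g t = 0}"
    by (intro card_mono) auto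
  then show ?thesis using count_inv[OF assms, of g] by simp
qed

lemma exc_end_bound:
  assumes "m \<le> n"
  shows "i \<le> card {t \<in> {1..m}. Yproc n g t = 0} \<Longrightarrow>
    \<exists>k. exc_end n g i = enat k \<and> k \<le> m \<and> card {t \<in> {1..k}. Yproc n g t = 0} = i"
proof (induction i)
  case 0
  show ?case by (rule exI[of _ 0]) (simp add: zero_enat_def)
next
  case (Suc i)
  then obtain k where k: "exc_end n g i = enat k" "k \<le> m" "card {t \<in> {1..k}. Yproc n g t = 0} = i"
    by fastforce
  have ex: "\<exists>t. k + 1 \<le> t \<and> t \<le> m \<and> Yproc n g t = 0"
  proof (rule ccontr)
    assume "\<not> ?thesis"
    then have "{t \<in> {1..m}. Yproc n g t = 0} \<subseteq> {t \<in> {1..k}. Yproc n g t = 0}" by auto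
    then have "card {t \<in> {1..m}. Yproc n g t = 0} \<le> card {t \<in> {1..k}. Yproc n g t = 0}"
      by (intro card_mono) auto
    then show False using Suc.prems k by simp
  qed
  define P where "P t = (k + 1 \<le> t \<and> t \<le> n \<and> Yproc n g t = 0)" for t
  have exP: "\<exists>t. P t" using ex assms P_def by auto
  define t0 where "t0 = (LEAST t. P t)"
  have Pt0: "P t0" unfolding t0_def using exP by (metis LeastI)
  have t0m: "t0 \<le> m"
  proof -
    obtain t where "k + 1 \<le> t" "t \<le> m" "Yproc n g t = 0" using ex by blast
    then have "P t" using assms P_def by auto
    then have "t0 \<le> t" unfolding t0_def by (rule Least_le)
    then show ?thesis using \<open>t \<le> m\<close> by simp
  qed
  have eq: "exc_end n g (Suc i) = enat t0"
    using k(1) exP unfolding t0_def P_def by simp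
  have sets: "{t \<in> {1..t0}. Yproc n g t = 0} = insert t0 {t \<in> {1..k}. Yproc n g t = 0}"
  proof (intro set_eqI iffI)
    fix t assume t: "t \<in> {t \<in> {1..t0}. Yproc n g t = 0}"
    show "t \<in> insert t0 {t \<in> {1..k}. Yproc n g t = 0}"
    proof (cases "t \<le> k")
      case True then show ?thesis using t by auto
    next
      case False
      show ?thesis
      proof (cases "t = t0")
        case True then show ?thesis by simp
      next
        case ne: False
        then have "t < t0" using t by auto
        then have "\<not> P t" unfolding t0_def by (rule not_less_Least)
        moreover have "P t" using t False t0m assms unfolding P_def by auto
        ultimately show ?thesis by simp
      qed
    qed
  next
    fix t assume "t \<in> insert t0 {t \<in> {1..k}. Yproc n g t = 0}"
    then show "t \<in> {t \<in> {1..t0}. Yproc n g t = 0}" using Pt0 unfolding P_def by auto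
  qed
  have "t0 \<notin> {t \<in> {1..k}. Yproc n g t = 0}" using Pt0 unfolding P_def by auto
  then have "card {t \<in> {1..t0}. Yproc n g t = 0} = Suc i" using sets k(3) by simp
  then show ?case using eq t0m by blast
qed

lemma good_suff:
  assumes "1 \<le> n" "m \<le> n" "1 \<le> Lpar n a" "real m \<le> B * real (Lpar n a) * sqrt (real (Tpar n a))"
    "real (disc g (expl_init n) m) \<le> real m - 2 * real (Lpar n a)"
  shows "g \<in> good_event n a B"
proof -
  have "real (2 * Lpar n a - 1) \<le> real (card {t \<in> {1..m}. Yproc n g t = 0})"
    using zeros_lower[OF assms(1,2), of g] assms(3,5) by (simp add: of_nat_diff)
  then have "2 * Lpar n a - 1 \<le> card {t \<in> {1..m}. Yproc n g t = 0}" by linarith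
  from exc_end_bound[OF assms(2) this] obtain k where
    "exc_end n g (2 * Lpar n a - 1) = enat k" "k \<le> m" by blast
  then show ?thesis using assms(4) unfolding good_event_def by force
qed

lemma vpairs_eq: "1 \<le> n \<Longrightarrow> vpairs n = pairs ({1} \<union> {2..n})"
proof -
  assume "1 \<le> n"
  then have "{1::nat} \<union> {2..n} = {1..n}" by auto
  then show ?thesis by (simp add: vpairs_def pairs_def)
qed

lemma tail_bound:
  fixes \<theta> p b :: real
  assumes "1 \<le> n" "0 \<le> \<theta>" "0 \<le> p" "p \<le> 1"
  shows "measure_pmf.prob (gnp n p) {g. b \<le> real (disc g (expl_init n) m)}
      \<le> exp (- \<theta> * b) * (1 - p + p * exp \<theta>) ^ sfun n m"
proof -
  define Q where "Q = gnp n p"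
  define S where "S = {g. b \<le> real (disc g (expl_init n) m)}"
  have cardV: "card ({1::nat} \<union> {2..n}) = n"
  proof -
    have "{1::nat} \<union> {2..n} = {1..n}" using assms(1) by auto
    then show ?thesis by simp
  qed
  have Qe: "Q = Pi_pmf (pairs ({1} \<union> {2..n})) False (\<lambda>_. bernoulli_pmf p)"
    unfolding Q_def gnp_def using vpairs_eq[OF assms(1)] by simp
  have mg: "(\<integral>\<^sup>+g. ennreal (exp (\<theta> * real (disc g (expl_init n) m))) \<partial>measure_pmf Q)
      \<le> ennreal ((1 - p + p * exp \<theta>) ^ sfun n m)"
    using mgf[of "{1}" "{2..n}" \<theta> p "{}" m] assms cardV unfolding Qe expl_init_def by simp
  have "emeasure (measure_pmf Q) S = (\<integral>\<^sup>+g. indicator S g \<partial>measure_pmf Q)"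
    by simp
  also have "\<dots> \<le> (\<integral>\<^sup>+g. ennreal (exp (- \<theta> * b)) * ennreal (exp (\<theta> * real (disc g (expl_init n) m))) \<partial>measure_pmf Q)"
  proof (intro nn_integral_mono)
    fix g
    show "indicator S g \<le> ennreal (exp (- \<theta> * b)) * ennreal (exp (\<theta> * real (disc g (expl_init n) m)))"
    proof (cases "g \<in> S")
      case True
      then have "0 \<le> \<theta> * (real (disc g (expl_init n) m) - b)" using assms(2) S_def by simp
      then have "1 \<le> exp (\<theta> * (real (disc g (expl_init n) m) - b))" by simp
      also have "exp (\<theta> * (real (disc g (expl_init n) m) - b)) = exp (- \<theta> * b) * exp (\<theta> * real (disc g (expl_init n) m))"
        by (simp add: exp_add[symmetric] algebra_simps)
      finally show ?thesis using True by (simp add: ennreal_mult'[symmetric])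
    next
      case False then show ?thesis by simp
    qed
  qed
  also have "\<dots> = ennreal (exp (- \<theta> * b)) * (\<integral>\<^sup>+g. ennreal (exp (\<theta> * real (disc g (expl_init n) m))) \<partial>measure_pmf Q)"
    by (rule nn_integral_cmult) simp
  also have "\<dots> \<le> ennreal (exp (- \<theta> * b)) * ennreal ((1 - p + p * exp \<theta>) ^ sfun n m)"
    by (intro mult_left_mono mg) simp
  also have "\<dots> = ennreal (exp (- \<theta> * b) * (1 - p + p * exp \<theta>) ^ sfun n m)"
    by (simp add: ennreal_mult')
  finally have "ennreal (measure_pmf.prob Q S) \<le> ennreal (exp (- \<theta> * b) * (1 - p + p * exp \<theta>) ^ sfun n m)"
    by (simp add: measure_pmf.emeasure_eq_measure)
  moreover have "0 \<le> exp (- \<theta> * b) * (1 - p + p * exp \<theta>) ^ sfun n m"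
    using assms by (intro mult_nonneg_nonneg zero_le_power) (auto intro: add_nonneg_nonneg)
  ultimately show ?thesis unfolding Q_def S_def using ennreal_le_iff by blast
qed

lemma sfun_bound: "k \<le> c \<Longrightarrow> real (sfun c k) \<le> real k * real c - real k ^ 2 / 2"
proof (induction k arbitrary: c)
  case 0 then show ?case by simp
next
  case (Suc k)
  have c1: "1 \<le> c" using Suc.prems by simp
  have "real (sfun (c - 1) k) \<le> real k * real (c - 1) - real k ^ 2 / 2"
    using Suc.prems by (intro Suc.IH) simp
  then have "real (sfun c (Suc k)) \<le> real (c - 1) + real k * real (c - 1) - real k ^ 2 / 2"
    by simp
  also have "\<dots> = (real c - 1) + real k * (real c - 1) - real k ^ 2 / 2" using c1 by (simp add: of_nat_diff)
  also have "\<dots> \<le> real (Suc k) * real c - real (Suc k) ^ 2 / 2"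
    by (simp add: power2_eq_square algebra_simps)
  finally show ?case .
qed

lemma pow_exp_bound:
  fixes y :: real assumes "0 \<le> y" shows "(1 + y) ^ k \<le> exp (real k * y)"
proof -
  have "(1 + y) ^ k \<le> exp y ^ k" using assms by (intro power_mono) (auto simp: exp_ge_add_one_self)
  also have "\<dots> = exp (real k * y)" by (simp add: exp_of_nat_mult)
  finally show ?thesis .
qed

lemma powr_facts:
  fixes n :: nat assumes "0 < n"
  shows "real n = (real n powr (1/3)) ^ 3" "real n powr (2/3) = (real n powr (1/3))^2"
    "real n powr (-1/3) = 1 / real n powr (1/3)"
proof -
  have p: "0 < real n" using assms by simp
  have "(real n powr (1/3)) ^ 3 = (real n powr (1/3)) powr 3" using p by simp
  also have "\<dots> = real n" by (simp add: powr_powr)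
  finally show "real n = (real n powr (1/3)) ^ 3" by simp
  have "(real n powr (1/3)) ^ 2 = (real n powr (1/3)) powr 2" using p by simp
  also have "\<dots> = real n powr (2/3)" by (simp add: powr_powr)
  finally show "real n powr (2/3) = (real n powr (1/3))^2" by simp
  have "real n powr (-1/3) = real n powr (- (1/3))" by simp
  also have "\<dots> = 1 / real n powr (1/3)" by (rule powr_minus_divide)
  finally show "real n powr (-1/3) = 1 / real n powr (1/3)" .
qed

lemma apow: "0 \<le> a \<Longrightarrow> (a::real) powr (3/2) = sqrt a ^ 3"
proof -
  assume a: "0 \<le> a"
  have "sqrt a ^ 3 = (a powr (1/2)) ^ 3" using a by (simp add: powr_half_sqrt)
  also have "\<dots> = a powr (3/2)"
  proof (cases "a = 0")
    case True then show ?thesis by simp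
  next
    case False
    then have "0 < a powr (1/2)" using a by simp
    then have "(a powr (1/2)) ^ 3 = (a powr (1/2)) powr 3" by simp
    also have "\<dots> = a powr (3/2)" by (simp add: powr_powr)
    finally show ?thesis .
  qed
  finally show ?thesis by simp
qed

lemma main_bound:
  fixes n :: nat and a B lam :: real
  assumes B: "64 \<le> B" and a1: "1 \<le> a" and al: "64 * lam^2 \<le> a"
    and x16: "16 \<le> real n powr (1/3)"
    and aeps: "a \<le> 64 / B^2 * (real n powr (1/3))^2"
  shows "measure_pmf.prob (gnp n ((1 + lam * real n powr (-1/3)) / real n)) (- good_event n a B)
     \<le> exp (- (B^3/1048576) * a powr (3/2))"
proof -
  define x where "x = real n powr (1/3)"
  have x16': "16 \<le> x" using x16 x_def by simp
  have xpos: "0 < x" using x16' by simp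
  have npos: "0 < n"
  proof (rule ccontr)
    assume "\<not> 0 < n" then have "n = 0" by simp
    then show False using x16 by simp
  qed
  have nx: "real n = x ^ 3" using powr_facts(1)[OF npos] x_def by simp
  have n23: "real n powr (2/3) = x^2" using powr_facts(2)[OF npos] x_def by simp
  have n13: "real n powr (-1/3) = 1 / x" using powr_facts(3)[OF npos] x_def by simp
  define y where "y = sqrt a"
  have y1: "1 \<le> y" using a1 y_def by simp
  have ay: "a = y^2" using a1 y_def by simp
  have apy: "a powr (3/2) = y^3" using apow a1 y_def by simp
  have ly: "8 * \<bar>lam\<bar> \<le> y"
  proof -
    have "(8 * \<bar>lam\<bar>)^2 \<le> y^2" using al ay by (simp add: power_mult_distrib)
    from power2_le_imp_le[OF this] show ?thesis using y1 by simp
  qed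
  have Bpos: "0 < B" using B by simp
  have yx: "B * y \<le> 8 * x"
  proof -
    have "(B * y)^2 = B^2 * a" using ay by (simp add: power_mult_distrib)
    also have "\<dots> \<le> B^2 * (64 / B^2 * x^2)" using aeps x_def by (intro mult_left_mono) auto
    also have "\<dots> = (8 * x)^2" using Bpos by (simp add: power_mult_distrib)
    finally have "(B * y)^2 \<le> (8 * x)^2" .
    from power2_le_imp_le[OF this] show ?thesis using xpos by simp
  qed
  have yx8: "y \<le> x / 8"
  proof -
    have "64 * y \<le> B * y" using B y1 by (intro mult_right_mono) auto
    then show ?thesis using yx by simp
  qed
  have ax: "a \<le> x^2"
  proof -
    have "y^2 \<le> (x/8)^2" using yx8 y1 by (intro power_mono) auto
    then have "y^2 * 64 \<le> x^2" by (simp add: power_divide)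
    moreover have "0 \<le> y^2" by simp
    ultimately show ?thesis using ay by linarith
  qed
  define T where "T = Tpar n a"
  define L where "L = Lpar n a"
  have Tdef: "real T = real_of_int \<lceil>x^2 / a\<rceil>"
  proof -
    have "0 \<le> x^2 / a" using a1 by simp
    then show ?thesis unfolding T_def Tpar_def n23 by simp
  qed
  have T1: "x^2 / a \<le> real T" using Tdef by linarith
  have T2: "real T \<le> x^2 / a + 1" using Tdef by linarith
  have xa1: "1 \<le> x^2 / a" using ax a1 by simp
  have T3: "real T \<le> 2 * x^2 / a" using T2 xa1 by simp
  have Tpos: "0 < real T" using T1 xa1 by simp
  have T4: "real T \<le> (2 * x / y)^2"
  proof -
    have "2 * x^2 / a \<le> 4 * x^2 / a" using a1 by (intro divide_right_mono) auto
    also have "\<dots> = (2 * x / y)^2" using ay y1 by (simp add: power_divide power_mult_distrib)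
    finally show ?thesis using T3 by simp
  qed
  have sT: "sqrt (real T) \<le> 2 * x / y"
  proof -
    have "sqrt (real T) \<le> sqrt ((2 * x / y)^2)" using T4 by (rule real_sqrt_le_mono)
    also have "\<dots> = 2 * x / y" using xpos y1 by simp
    finally show ?thesis .
  qed
  have sTpos: "0 < sqrt (real T)" using Tpos by simp
  define r where "r = x^3 / (2 * real T)"
  have rpos: "0 \<le> r" using xpos Tpos r_def by simp
  have Ldef: "real L = real_of_int \<lfloor>r\<rfloor>"
    using rpos unfolding L_def Lpar_def r_def T_def[symmetric] nx by simp
  have L1: "r - 1 \<le> real L" using Ldef by linarith
  have L2: "real L \<le> r" using Ldef by linarith
  have r1: "r \<le> x * a / 2"
  proof -
    have "r \<le> x^3 / (2 * (x^2 / a))" unfolding r_def using T1 xpos a1 xa1 Tpos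
      by (intro divide_left_mono mult_left_mono) auto
    also have "\<dots> = x * a / 2" using xpos by (simp add: field_simps power_def)
    finally show ?thesis .
  qed
  have r2: "x * a / 4 \<le> r"
  proof -
    have "x^3 / (2 * (2 * x^2 / a)) \<le> r" unfolding r_def using T3 xpos a1 Tpos
      by (intro divide_left_mono mult_left_mono) auto
    moreover have "x^3 / (2 * (2 * x^2 / a)) = x * a / 4" using xpos by (simp add: field_simps power_def)
    ultimately show ?thesis by linarith
  qed
  have L2a: "2 * real L \<le> x * a" using L2 r1 by simp
  have Lge1: "1 \<le> Lpar n a"
  proof -
    have "16 * 1 \<le> x * a" using x16' a1 by (intro mult_mono) auto
    then have "3 \<le> real L" using L1 r2 by simp
    then show ?thesis using L_def by simp
  qed
  have LsT: "x^2 * y / 8 \<le> real L * sqrt (real T)"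
  proof -
    define s where "s = sqrt (real T)"
    have spos: "0 < s" using sTpos s_def by simp
    have Ts: "real T = s * s" using Tpos s_def by simp
    have "r * sqrt (real T) = x^3 / (2 * sqrt (real T))"
      unfolding r_def s_def[symmetric] Ts using spos by (simp add: field_simps)
    also have "\<dots> \<ge> x^3 / (2 * (2 * x / y))" using sT sTpos xpos y1
      by (intro divide_left_mono mult_left_mono) auto
    finally have a: "x^3 / (2 * (2 * x / y)) \<le> r * sqrt (real T)" .
    have b: "x^3 / (2 * (2 * x / y)) = x^2 * y / 4" using xpos y1 by (simp add: field_simps power_def)
    have c: "(r - 1) * sqrt (real T) \<le> real L * sqrt (real T)" using L1 sTpos by (intro mult_right_mono) auto
    have "2 * x / y \<le> 2 * x" using y1 xpos by (simp add: divide_le_eq)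
    then have d: "sqrt (real T) \<le> 2 * x" using sT by simp
    have e: "2 * x \<le> x^2 * y / 8"
    proof -
      have "16 * 1 \<le> x * y" using x16' y1 by (intro mult_mono) auto
      then have "x * 16 \<le> x * (x * y)" using xpos by (intro mult_left_mono) auto
      then show ?thesis by (simp add: power2_eq_square algebra_simps)
    qed
    have c': "r * sqrt (real T) - sqrt (real T) \<le> real L * sqrt (real T)" using c by (simp add: algebra_simps)
    show ?thesis using a b c' d e by linarith
  qed
  define m where "m = nat \<lfloor>B * x^2 * y / 8\<rfloor>"
  have Bxy0: "0 \<le> B * x^2 * y / 8" using Bpos xpos y1 by simp
  have mdef: "real m = real_of_int \<lfloor>B * x^2 * y / 8\<rfloor>" using Bxy0 m_def by simp
  have m1: "real m \<le> B * x^2 * y / 8" using mdef by linarith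
  have Bxy: "16 \<le> B * x^2 * y"
  proof -
    have "1 * 1 \<le> x * x" using x16' by (intro mult_mono) auto
    then have xx: "1 \<le> x^2" by (simp add: power2_eq_square)
    have "64 * 1 \<le> B * x^2" using B xx by (intro mult_mono) auto
    then have "64 * 1 \<le> B * x^2 * y" using y1 by (intro mult_mono) auto
    then show ?thesis by simp
  qed
  have m2: "B * x^2 * y / 16 \<le> real m" using mdef Bxy by linarith
  have mB: "real m \<le> B * real L * sqrt (real T)"
  proof -
    have "B * (x^2 * y / 8) \<le> B * (real L * sqrt (real T))" using LsT Bpos by (intro mult_left_mono) auto
    then show ?thesis using m1 by (simp add: algebra_simps)
  qed
  have mn: "m \<le> n"
  proof -
    have "x^2 * (B * y) \<le> x^2 * (8 * x)" using yx by (intro mult_left_mono) auto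
    then have "real m \<le> x^3" using m1 by (simp add: power2_eq_square power3_eq_cube algebra_simps)
    then show ?thesis using nx by simp
  qed
  have lamx: "\<bar>lam\<bar> \<le> x" using ly yx8 xpos by simp
  have n2: "2 \<le> real n"
  proof -
    have "16 * 1 \<le> x * x" using x16' by (intro mult_mono) auto
    then have "16 * 1 \<le> x * x * x" using x16' by (intro mult_mono) auto
    then show ?thesis using nx by (simp add: power3_eq_cube)
  qed
  define p where "p = (1 + lam / x) / real n"
  have peq: "(1 + lam * real n powr (-1/3)) / real n = p" using n13 p_def by simp
  have q0: "0 \<le> 1 + lam / x" using lamx xpos by (simp add: abs_le_iff field_simps)
  have q2: "1 + lam / x \<le> 2" using lamx xpos by (simp add: abs_le_iff field_simps)
  have p0: "0 \<le> p" using q0 n2 p_def by simp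
  have p1: "p \<le> 1"
  proof -
    have "1 + lam / x \<le> real n" using q2 n2 by linarith
    then have "(1 + lam / x) / real n \<le> real n / real n" using n2 by (intro divide_right_mono) auto
    then show ?thesis using n2 p_def by simp
  qed
  define th where "th = B * y / (512 * x)"
  have th0: "0 \<le> th" using Bpos y1 xpos th_def by simp
  have th1: "th \<le> 1" using yx xpos th_def by (simp add: divide_le_eq)
  define b where "b = real m - 2 * real L"
  have sub: "- good_event n a B \<subseteq> {g. b \<le> real (disc g (expl_init n) m)}"
  proof
    fix g assume g: "g \<in> - good_event n a B"
    show "g \<in> {g. b \<le> real (disc g (expl_init n) m)}"
    proof (rule ccontr)
      assume "g \<notin> {g. b \<le> real (disc g (expl_init n) m)}"
      then have "real (disc g (expl_init n) m) \<le> real m - 2 * real (Lpar n a)" using b_def L_def by simp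
      then have "g \<in> good_event n a B"
        using good_suff[of n m a B g] npos mn Lge1 mB L_def T_def by simp
      then show False using g by simp
    qed
  qed
  define S where "S = sfun n m"
  define s where "s = real S"
  have s0: "0 \<le> s" using s_def by simp
  have s1: "s \<le> real m * real n - real m ^ 2 / 2" using sfun_bound[OF mn] s_def S_def by simp
  have prob1: "measure_pmf.prob (gnp n p) (- good_event n a B) \<le> measure_pmf.prob (gnp n p) {g. b \<le> real (disc g (expl_init n) m)}"
    using sub by (intro measure_pmf.finite_measure_mono) auto
  also have "\<dots> \<le> exp (- th * b) * (1 - p + p * exp th) ^ S"
    using tail_bound[OF _ th0 p0 p1, of n b m] npos S_def by simp
  also have "(1 - p + p * exp th) ^ S \<le> exp (real S * (p * (exp th - 1)))"
  proof -
    have "0 \<le> p * (exp th - 1)" using p0 th0 by simp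
    from pow_exp_bound[OF this, of S] show ?thesis by (simp add: algebra_simps)
  qed
  finally have P0: "measure_pmf.prob (gnp n p) (- good_event n a B) \<le> exp (- th * b) * exp (real S * (p * (exp th - 1)))"
    by simp
  have "exp (- th * b) * exp (real S * (p * (exp th - 1))) = exp (- th * b + s * p * (exp th - 1))"
    unfolding s_def exp_add[symmetric] by (simp add: algebra_simps)
  then have P1: "measure_pmf.prob (gnp n p) (- good_event n a B) \<le> exp (- th * b + s * p * (exp th - 1))"
    using P0 by simp
  define Sp where "Sp = s * p"
  have sn: "s / real n \<le> real m"
  proof -
    have "0 \<le> (real m)^2 / 2" by simp
    then have "s \<le> real m * real n" using s1 by linarith
    then show ?thesis using n2 by (simp add: divide_le_eq)
  qed
  have Sp0: "0 \<le> Sp" using s0 p0 Sp_def by simp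
  have Sp_eq: "Sp = s / real n * (1 + lam / x)" using Sp_def p_def by simp
  have Sp1: "Sp \<le> 2 * real m"
  proof -
    have "s / real n * (1 + lam / x) \<le> real m * 2" using sn q0 q2 s0 n2 by (intro mult_mono) auto
    then show ?thesis using Sp_eq by simp
  qed
  have Sp2: "Sp \<le> real m - real m ^ 2 / (2 * real n) + \<bar>lam\<bar> * real m / x"
  proof -
    have e1: "s / real n \<le> real m - real m ^ 2 / (2 * real n)"
      using s1 n2 by (simp add: field_simps)
    have "s / real n * (lam / x) \<le> s / real n * (\<bar>lam\<bar> / x)"
      using s0 n2 xpos by (intro mult_left_mono divide_right_mono) auto
    also have "\<dots> \<le> real m * (\<bar>lam\<bar> / x)" using sn xpos by (intro mult_right_mono) auto
    finally have e2: "s / real n * (lam / x) \<le> \<bar>lam\<bar> * real m / x" by (simp add: mult.commute)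
    have "Sp = s / real n + s / real n * (lam / x)" using Sp_eq by (simp add: algebra_simps)
    then show ?thesis using e1 e2 by linarith
  qed
  define G where "G = B^2 * x * a / 1024"
  define V where "V = B * x^2 * y / 4"
  have B2: "4096 \<le> B^2"
  proof -
    have "64 * 64 \<le> B * B" using B by (intro mult_mono) auto
    then show ?thesis by (simp add: power2_eq_square)
  qed
  have xa0: "0 \<le> x * a" using xpos a1 by simp
  have hm2: "B^2 * x * a / 512 \<le> real m ^ 2 / (2 * real n)"
  proof -
    have "(B * x^2 * y / 16)^2 \<le> real m ^ 2" using m2 Bxy by (intro power_mono) auto
    then have "(B * x^2 * y / 16)^2 / (2 * x^3) \<le> real m ^ 2 / (2 * x^3)" using xpos by (intro divide_right_mono) auto
    moreover have "(B * x^2 * y / 16)^2 / (2 * x^3) = B^2 * x * a / 512"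
      using xpos ay by (simp add: field_simps power2_eq_square power3_eq_cube)
    ultimately show ?thesis using nx by simp
  qed
  have hL: "2 * real L \<le> B^2 * x * a / 4096"
  proof -
    have "x * a * 4096 \<le> x * a * B^2" using B2 xa0 by (intro mult_left_mono) auto
    then show ?thesis using L2a by (simp add: algebra_simps)
  qed
  have hlam: "\<bar>lam\<bar> * real m / x \<le> B^2 * x * a / 4096"
  proof -
    have "\<bar>lam\<bar> * real m \<le> (y / 8) * (B * x^2 * y / 8)" using ly m1 by (intro mult_mono) auto
    also have "\<dots> = B * x^2 * a / 64" using ay by (simp add: power2_eq_square)
    also have "\<dots> \<le> B^2 * x^2 * a / 4096"
    proof -
      have "B * 64 \<le> B * B" using B by (intro mult_left_mono) auto
      then have "(B * 64) * (x^2 * a) \<le> (B * B) * (x^2 * a)" using a1 by (intro mult_right_mono) auto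
      then show ?thesis by (simp add: power2_eq_square algebra_simps)
    qed
    finally have "\<bar>lam\<bar> * real m \<le> B^2 * x^2 * a / 4096" .
    then have "\<bar>lam\<bar> * real m / x \<le> (B^2 * x^2 * a / 4096) / x" using xpos by (intro divide_right_mono) auto
    also have "\<dots> = B^2 * x * a / 4096" using xpos by (simp add: power2_eq_square)
    finally show ?thesis .
  qed
  have hG: "G \<le> b - Sp"
  proof -
    have "b - Sp \<ge> real m ^ 2 / (2 * real n) - 2 * real L - \<bar>lam\<bar> * real m / x"
      using Sp2 b_def by simp
    moreover have "B^2 * x * a / 512 - B^2 * x * a / 4096 - B^2 * x * a / 4096 \<ge> G"
    proof -
      have "0 \<le> B^2 * (x * a)" using xa0 by simp
      then have "0 \<le> B^2 * x * a" by (simp add: mult.assoc)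
      then show ?thesis unfolding G_def by linarith
    qed
    ultimately show ?thesis using hm2 hL hlam by linarith
  qed
  have hV: "Sp \<le> V" using Sp1 m1 V_def by simp
  have E1: "- th * b + s * p * (exp th - 1) \<le> - th * b + Sp * (th + th^2)"
  proof -
    have "exp th - 1 \<le> th + th^2" using exp_bound[OF th0 th1] by simp
    then have "Sp * (exp th - 1) \<le> Sp * (th + th^2)" using Sp0 by (intro mult_left_mono) auto
    then show ?thesis using Sp_def by simp
  qed
  have E2: "- th * b + Sp * (th + th^2) \<le> - th * G + th^2 * V"
  proof -
    have "th * G \<le> th * (b - Sp)" using hG th0 by (intro mult_left_mono) auto
    moreover have "th^2 * Sp \<le> th^2 * V" using hV by (intro mult_left_mono) auto
    ultimately show ?thesis by (simp add: algebra_simps)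
  qed
  have E3: "- th * G + th^2 * V = - (B^3 / 1048576) * y^3"
    unfolding th_def G_def V_def using xpos ay by (simp add: field_simps power2_eq_square power3_eq_cube)
  have "measure_pmf.prob (gnp n p) (- good_event n a B) \<le> exp (- (B^3 / 1048576) * y^3)"
    using P1 E1 E2 E3 by (smt (verit) exp_le_cancel_iff)
  then show ?thesis using peq apy by simp
qed

lemma x16_of: "4096 \<le> n \<Longrightarrow> 16 \<le> real n powr (1/3)"
proof -
  assume "4096 \<le> n"
  then have "(4096::real) powr (1/3) \<le> real n powr (1/3)" by (intro powr_mono2) auto
  moreover have "(4096::real) powr (1/3) = 16"
  proof -
    have "(4096::real) = 16 powr 3" by simp
    then have "(4096::real) powr (1/3) = (16 powr 3) powr (1/3)" by simp
    also have "\<dots> = 16" by (simp add: powr_powr)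
    finally show ?thesis .
  qed
  ultimately show ?thesis by simp
qed

lemma main_eventually:
  fixes lam B :: real and A :: "nat \<Rightarrow> real"
  assumes B: "64 \<le> B" and h: "A \<in> o(\<lambda>n. real n powr (2/3)) \<and> (\<forall>n. A n \<ge> max 1 (64 * lam^2))"
  shows "\<forall>\<^sub>F n in sequentially.
        measure_pmf.prob (gnp n ((1 + lam * real n powr (-1/3)) / real n))
          (- good_event n (A n) B) \<le> exp (- (B^3 / 1048576) * A n powr (3/2))"
proof -
    have Bp: "0 < 64 / B^2" using B by simp
    have ev1: "\<forall>\<^sub>F n in sequentially. norm (A n) \<le> 64 / B^2 * norm (real n powr (2/3))"
      using landau_o.smallD[OF conjunct1[OF h] Bp] .
    have ev2: "\<forall>\<^sub>F n in sequentially. 4096 \<le> n" by (rule eventually_ge_at_top)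
    show ?thesis
      using ev1 ev2
    proof eventually_elim
      case (elim n)
      have npos: "0 < n" using elim(2) by simp
      have a1: "1 \<le> A n" "64 * lam^2 \<le> A n" using h by auto
      have "A n \<le> norm (A n)" by simp
      also have "\<dots> \<le> 64 / B^2 * norm (real n powr (2/3))" using elim(1) .
      also have "norm (real n powr (2/3)) = (real n powr (1/3))^2"
        using powr_facts(2)[OF npos] by simp
      finally have aeps: "A n \<le> 64 / B^2 * (real n powr (1/3))^2" .
      show ?case by (rule main_bound[OF B a1 x16_of[OF elim(2)] aeps])
    qed
qed

theorem proposition1:
  fixes lam :: real
  shows "\<exists>B0 > 0. \<exists>A0 > 0. \<forall>B \<ge> B0. \<exists>c > 0. \<forall>A :: nat \<Rightarrow> real.
     (A \<in> o(\<lambda>n. real n powr (2/3)) \<and> (\<forall>n. A n \<ge> A0)) \<longrightarrow>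
     (\<forall>\<^sub>F n in sequentially.
        measure_pmf.prob (gnp n ((1 + lam * real n powr (-1/3)) / real n))
          (- good_event n (A n) B) \<le> exp (- c * A n powr (3/2)))"
  apply (rule exI[of _ 64], rule conjI, simp)
  apply (rule exI[of _ "max 1 (64 * lam^2)"], rule conjI, simp)
  apply (intro allI impI)
  subgoal for B
    apply (rule exI[of _ "B^3/1048576"], rule conjI)
     apply simp
    apply (intro allI impI)
    subgoal for A using main_eventually[of B A lam] by blast
    done
  done

end
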